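(* Let $\mathcal{A}$ and $\mathcal{B}$ be alternative $W^{*}$-factors with identities $1_{\mathcal{A}},1_{\mathcal{B}}$, with $\mathcal{A}$ containing a projection $p\notin\{0,1_{\mathcal{A}}\}$, and let $\Phi:\mathcal{A}\to\mathcal{B}$ be a bijection satisfying $\Phi(ab-ba^{*})=\Phi(a)\Phi(b)-\Phi(b)\Phi(a)^{*}$ for all $a,b\in\mathcal{A}$. Then either $\Phi(ia)=i\Phi(a)$ for all $a\in\mathcal{A}$, or $\Phi(ia)=-i\Phi(a)$ for all $a\in\mathcal{A}$.
   Context: An alternative $W^{*}$-factor is a prime alternative $C^{*}$-algebra (complete normed alternative complex $\ast$-algebra with $\|a^{*}a\|=\|a\|^{2}$, where alternative means $a^{2}b=a(ab)$, $ba^{2}=(ba)a$) that is a dual Banach space; it is unital with center $\mathbb{C}1$. A projection is a nonzero self-adjoint idempotent. *)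

theory Defs
  imports "HOL-Analysis.Analysis"
begin

definition complex_normed_space :: "(complex \<Rightarrow> 'a::real_normed_vector \<Rightarrow> 'a) \<Rightarrow> bool" where
  "complex_normed_space sc \<longleftrightarrow>
     (\<forall>x. sc 1 x = x) \<and>
     (\<forall>c d x. sc c (sc d x) = sc (c * d) x) \<and>
     (\<forall>c x y. sc c (x + y) = sc c x + sc c y) \<and>
     (\<forall>c d x. sc (c + d) x = sc c x + sc d x) \<and>
     (\<forall>r x. sc (complex_of_real r) x = r *\<^sub>R x) \<and>
     (\<forall>c x. norm (sc c x) = cmod c * norm x)"

definition alt_C_star_algebra ::
  "(complex \<Rightarrow> 'a::banach \<Rightarrow> 'a) \<Rightarrow> ('a \<Rightarrow> 'a \<Rightarrow> 'a) \<Rightarrow> ('a \<Rightarrow> 'a) \<Rightarrow> bool" where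
  "alt_C_star_algebra sc mul st \<longleftrightarrow>
     complex_normed_space sc \<and>
     (\<forall>x y z. mul (x + y) z = mul x z + mul y z) \<and>
     (\<forall>x y z. mul x (y + z) = mul x y + mul x z) \<and>
     (\<forall>c x y. mul (sc c x) y = sc c (mul x y)) \<and>
     (\<forall>c x y. mul x (sc c y) = sc c (mul x y)) \<and>
     (\<forall>x y. norm (mul x y) \<le> norm x * norm y) \<and>
     (\<forall>x y. st (x + y) = st x + st y) \<and>
     (\<forall>c x. st (sc c x) = sc (cnj c) (st x)) \<and>
     (\<forall>x. st (st x) = x) \<and>
     (\<forall>x y. st (mul x y) = mul (st y) (st x)) \<and>
     (\<forall>a. norm (mul (st a) a) = (norm a)\<^sup>2) \<and>
     (\<forall>a b. mul (mul a a) b = mul a (mul a b)) \<and>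
     (\<forall>a b. mul b (mul a a) = mul (mul b a) a)"

definition alg_ideal ::
  "(complex \<Rightarrow> 'a::banach \<Rightarrow> 'a) \<Rightarrow> ('a \<Rightarrow> 'a \<Rightarrow> 'a) \<Rightarrow> 'a set \<Rightarrow> bool" where
  "alg_ideal sc mul I \<longleftrightarrow>
     0 \<in> I \<and> (\<forall>x\<in>I. \<forall>y\<in>I. x + y \<in> I) \<and> (\<forall>c. \<forall>x\<in>I. sc c x \<in> I) \<and>
     (\<forall>a. \<forall>x\<in>I. mul a x \<in> I \<and> mul x a \<in> I)"

definition prime_algebra ::
  "(complex \<Rightarrow> 'a::banach \<Rightarrow> 'a) \<Rightarrow> ('a \<Rightarrow> 'a \<Rightarrow> 'a) \<Rightarrow> bool" where
  "prime_algebra sc mul \<longleftrightarrow>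
     (\<forall>I J. alg_ideal sc mul I \<and> alg_ideal sc mul J \<and> (\<forall>x\<in>I. \<forall>y\<in>J. mul x y = 0)
        \<longrightarrow> I = {0} \<or> J = {0})"

definition is_dual_of ::
  "(complex \<Rightarrow> 'a::banach \<Rightarrow> 'a) \<Rightarrow> (complex \<Rightarrow> 'x::banach \<Rightarrow> 'x) \<Rightarrow> bool" where
  "is_dual_of sc scX \<longleftrightarrow>
     (\<exists>T :: 'a \<Rightarrow> ('x \<Rightarrow> complex).
        bij_betw T UNIV {f. bounded_linear f \<and> (\<forall>c x. f (scX c x) = c * f x)} \<and>
        (\<forall>a b. T (a + b) = (\<lambda>x. T a x + T b x)) \<and>
        (\<forall>c a. T (sc c a) = (\<lambda>x. c * T a x)) \<and>
        (\<forall>a. norm a = onorm (T a)))"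

text \<open>Alternative W*-factor: prime alternative C*-algebra which is a dual Banach space
(with a predual living in the type 'x).\<close>
definition alt_W_star_factor ::
  "(complex \<Rightarrow> 'a::banach \<Rightarrow> 'a) \<Rightarrow> ('a \<Rightarrow> 'a \<Rightarrow> 'a) \<Rightarrow> ('a \<Rightarrow> 'a) \<Rightarrow> 'x::banach itself \<Rightarrow> bool" where
  "alt_W_star_factor sc mul st (_ :: 'x itself) \<longleftrightarrow>
     alt_C_star_algebra sc mul st \<and> prime_algebra sc mul \<and>
     (\<exists>scX :: complex \<Rightarrow> 'x \<Rightarrow> 'x. complex_normed_space scX \<and> is_dual_of sc scX)"

definition is_projection :: "('a::banach \<Rightarrow> 'a \<Rightarrow> 'a) \<Rightarrow> ('a \<Rightarrow> 'a) \<Rightarrow> 'a \<Rightarrow> bool" where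
  "is_projection mul st p \<longleftrightarrow> p \<noteq> 0 \<and> st p = p \<and> mul p p = p"

end

theory Submission
  imports Defs
begin

locale altalg =
  fixes sc :: "complex \<Rightarrow> 'a::banach \<Rightarrow> 'a" and mul :: "'a \<Rightarrow> 'a \<Rightarrow> 'a" and st :: "'a \<Rightarrow> 'a" and one :: 'a
  assumes alt: "alt_C_star_algebra sc mul st"
    and unit: "\<forall>x. mul one x = x \<and> mul x one = x"
begin

lemmas alt' = alt[unfolded alt_C_star_algebra_def complex_normed_space_def]
lemma mul_one_left[simp]: "mul one x = x" using unit by blast
lemma mul_one_right[simp]: "mul x one = x" using unit by blast
lemma sc_one[simp]: "sc 1 x = x" using alt' by simp
lemma sc_sc[simp]: "sc c (sc d x) = sc (c*d) x" using alt' by simp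
lemma sc_add_right: "sc c (x+y) = sc c x + sc c y" using alt' by simp
lemma sc_add_left: "sc (c+d) x = sc c x + sc d x" using alt' by simp
lemma sc_real: "sc (complex_of_real r) x = r *\<^sub>R x" using alt' by simp
lemma mul_add_left: "mul (x+y) z = mul x z + mul y z" using alt' by simp
lemma mul_add_right: "mul x (y+z) = mul x y + mul x z" using alt' by simp
lemma mul_sc_left[simp]: "mul (sc c x) y = sc c (mul x y)" using alt' by simp
lemma mul_sc_right[simp]: "mul x (sc c y) = sc c (mul x y)" using alt' by simp
lemma st_add: "st (x+y) = st x + st y" using alt' by simp
lemma st_sc[simp]: "st (sc c x) = sc (cnj c) (st x)" using alt' by simp
lemma st_st[simp]: "st (st x) = x" using alt' by simp
lemma st_mul: "st (mul x y) = mul (st y) (st x)" using alt' by simp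
lemma left_alt: "mul (mul a a) b = mul a (mul a b)" using alt' by simp
lemma right_alt: "mul b (mul a a) = mul (mul b a) a" using alt' by simp

lemma mul_zero_left[simp]: "mul 0 x = 0"
  using mul_add_left[of 0 0 x] by simp
lemma mul_zero_right[simp]: "mul x 0 = 0"
  using mul_add_right[of x 0 0] by simp
lemma mul_minus_left[simp]: "mul (-x) y = - mul x y"
proof -
  have "mul x y + mul (-x) y = 0" using mul_add_left[of x "-x" y] by simp
  thus ?thesis using neg_eq_iff_add_eq_0 by metis
qed
lemma mul_minus_right[simp]: "mul x (-y) = - mul x y"
proof -
  have "mul x y + mul x (-y) = 0" using mul_add_right[of x y "-y"] by simp
  thus ?thesis using neg_eq_iff_add_eq_0 by metis
qed
lemma mul_diff_left: "mul (x-y) z = mul x z - mul y z"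
  using mul_add_left[of x "-y" z] by simp
lemma mul_diff_right: "mul x (y-z) = mul x y - mul x z"
  using mul_add_right[of x y "-z"] by simp
lemma st_zero[simp]: "st 0 = 0"
  using st_add[of 0 0] by simp
lemma st_minus[simp]: "st (-x) = - st x"
proof -
  have "st x + st (-x) = 0" using st_add[of x "-x"] by simp
  thus ?thesis using neg_eq_iff_add_eq_0 by metis
qed
lemma st_diff: "st (x-y) = st x - st y"
  using st_add[of x "-y"] by simp
lemma sc_zero_left[simp]: "sc 0 x = 0"
  using sc_real[of 0 x] by simp
lemma sc_zero_right[simp]: "sc c 0 = 0"
  using sc_add_right[of c 0 0] by simp
lemma sc_minus_right[simp]: "sc c (-x) = - sc c x"
proof -
  have "sc c x + sc c (-x) = 0" using sc_add_right[of c x "-x"] by simp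
  thus ?thesis using neg_eq_iff_add_eq_0 by metis
qed
lemma sc_minus_left: "sc (-c) x = - sc c x"
proof -
  have "sc c x + sc (-c) x = 0" using sc_add_left[of c "-c" x] by simp
  thus ?thesis using neg_eq_iff_add_eq_0 by metis
qed
lemma sc_diff_right: "sc c (x-y) = sc c x - sc c y"
  using sc_add_right[of c x "-y"] by simp
lemma mul_scaleR_left[simp]: "mul (r *\<^sub>R x) y = r *\<^sub>R mul x y"
  by (metis sc_real mul_sc_left)
lemma mul_scaleR_right[simp]: "mul x (r *\<^sub>R y) = r *\<^sub>R mul x y"
  by (metis sc_real mul_sc_right)
lemma st_one[simp]: "st one = one"
  by (metis st_mul mul_one_left st_st)
lemma sc_inj: assumes "c \<noteq> 0" "sc c v = sc c w" shows "v = w"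
proof -
  have "sc (inverse c) (sc c v) = sc (inverse c) (sc c w)" using assms by simp
  thus ?thesis using assms(1) by simp
qed

lemma left_lin: "mul (mul x y) z + mul (mul y x) z = mul x (mul y z) + mul y (mul x z)"
  using left_alt[of "x+y" z] by (simp add: mul_add_left mul_add_right left_alt algebra_simps)
lemma right_lin: "mul z (mul x y) + mul z (mul y x) = mul (mul z x) y + mul (mul z y) x"
  using right_alt[of z "x+y"] by (simp add: mul_add_left mul_add_right right_alt[symmetric] algebra_simps)

lemma three: "(3::real) *\<^sub>R (v::'b::real_vector) = v + (v + v)"
proof -
  have "(3::real) *\<^sub>R v = (1 + 2) *\<^sub>R v" by simp
  also have "\<dots> = v + 2 *\<^sub>R v" by (simp only: scaleR_add_left scaleR_one)
  finally show ?thesis by (simp add: scaleR_2)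
qed
lemma lin3: fixes p q r :: "'b::real_vector" assumes "p + r = q + q" "r + r = q + p" shows "p = q"
proof -
  have r: "r = q + q - p" using assms(1) by (metis add_diff_cancel_left')
  have "q + (q + q) = p + (p + p)" using assms(2) unfolding r by (simp add: algebra_simps)
  hence "(3::real) *\<^sub>R p = (3::real) *\<^sub>R q" by (simp only: three)
  thus "p = q" by simp
qed

definition central where "central z \<longleftrightarrow> (\<forall>y. mul z y = mul y z)"

lemma central_right: assumes "central z" shows "mul (mul x y) z = mul x (mul y z)"
proof -
  have c1: "mul x z = mul z x" "mul z y = mul y z" "mul z (mul x y) = mul (mul x y) z"
    using assms unfolding central_def by auto
  have h1: "mul x (mul y z) + mul x (mul y z) = mul (mul x y) z + mul (mul z x) y"
    using right_lin[of x y z] by (simp only: c1(1) c1(2))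
  have h2: "mul (mul z x) y + mul (mul z x) y = mul x (mul y z) + mul (mul x y) z"
    using left_lin[of x z y] by (simp only: c1)
  show ?thesis by (rule lin3[OF h1[symmetric] h2])
qed
lemma central_mid: assumes "central z" shows "mul (mul x z) y = mul x (mul z y)"
proof -
  have "mul x (mul y z) + mul x (mul z y) = mul x (mul y z) + mul (mul x z) y"
    using right_lin[of x y z] by (simp only: central_right[OF assms])
  thus ?thesis by (simp only: add_left_cancel)
qed
lemma central_left: assumes "central z" shows "mul (mul z x) y = mul z (mul x y)"
proof -
  have "mul x (mul z y) + mul (mul z x) y = mul x (mul z y) + mul z (mul x y)"
    using left_lin[of x z y] by (simp only: central_mid[OF assms])
  thus ?thesis by (simp only: add_left_cancel)
qed

lemma central_mul: assumes "central a" "central b" shows "central (mul a b)"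
  unfolding central_def
proof
  fix y
  have "mul (mul a b) y = mul a (mul b y)" using central_mid[OF assms(2)] by simp
  also have "\<dots> = mul a (mul y b)" using assms(2) unfolding central_def by simp
  also have "\<dots> = mul (mul a y) b" using central_right[OF assms(2)] by simp
  also have "\<dots> = mul (mul y a) b" using assms(1) unfolding central_def by simp
  also have "\<dots> = mul y (mul a b)" using central_mid[OF assms(1)] by simp
  finally show "mul (mul a b) y = mul y (mul a b)" .
qed
lemma central_add: "central a \<Longrightarrow> central b \<Longrightarrow> central (a+b)"
  unfolding central_def by (simp add: mul_add_left mul_add_right)
lemma central_scaleR: "central a \<Longrightarrow> central (r *\<^sub>R a)"
  unfolding central_def by simp
lemma central_sc: "central a \<Longrightarrow> central (sc c a)"
  unfolding central_def by simp
lemma central_one: "central one" unfolding central_def by simp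
lemma central_diff: "central a \<Longrightarrow> central b \<Longrightarrow> central (a-b)"
  unfolding central_def by (simp add: mul_diff_left mul_diff_right)

lemma central_ideal: assumes "central e" shows "alg_ideal sc mul (range (mul e))"
proof -
  have a: "0 \<in> range (mul e)" by (metis mul_zero_right rangeI)
  have b: "\<forall>x\<in>range (mul e). \<forall>y\<in>range (mul e). x + y \<in> range (mul e)"
    by (auto simp: mul_add_right[symmetric])
  have c: "\<forall>c. \<forall>x\<in>range (mul e). sc c x \<in> range (mul e)"
    by (auto simp: mul_sc_right[symmetric] simp del: mul_sc_right)
  have d: "\<forall>a. \<forall>x\<in>range (mul e). mul a x \<in> range (mul e) \<and> mul x a \<in> range (mul e)"
  proof (intro allI ballI)
    fix a x assume "x \<in> range (mul e)"
    then obtain u where x: "x = mul e u" by auto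
    have ae: "mul a e = mul e a" using assms unfolding central_def by simp
    have "mul a x = mul (mul a e) u" using x central_mid[OF assms, of a u] by simp
    also have "\<dots> = mul e (mul a u)" unfolding ae using central_left[OF assms] by simp
    finally have "mul a x = mul e (mul a u)" .
    moreover have "mul x a = mul e (mul u a)" using x central_left[OF assms] by simp
    ultimately show "mul a x \<in> range (mul e) \<and> mul x a \<in> range (mul e)" by auto
  qed
  show ?thesis unfolding alg_ideal_def using a b c d by blast
qed

lemma central_idem: assumes pr: "prime_algebra sc mul" and c: "central e" and i: "mul e e = e"
  shows "e = 0 \<or> e = one"
proof -
  define f where "f = one - e"
  have cf: "central f" unfolding f_def by (rule central_diff[OF central_one c])
  have ef: "mul e f = 0" unfolding f_def by (simp add: mul_diff_right i)
  have z: "\<forall>x\<in>range (mul e). \<forall>y\<in>range (mul f). mul x y = 0"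
  proof (intro ballI)
    fix x y assume "x \<in> range (mul e)" "y \<in> range (mul f)"
    then obtain u v where xy: "x = mul e u" "y = mul f v" by auto
    have "mul x y = mul e (mul u (mul f v))" using xy central_left[OF c] by simp
    also have "mul u (mul f v) = mul f (mul u v)"
    proof -
      have uf: "mul u f = mul f u" using cf unfolding central_def by simp
      have "mul u (mul f v) = mul (mul u f) v" using central_mid[OF cf, of u v] by simp
      also have "\<dots> = mul f (mul u v)" unfolding uf using central_left[OF cf] by simp
      finally show ?thesis .
    qed
    also have "mul e (mul f (mul u v)) = mul (mul e f) (mul u v)" using central_left[OF c] by simp
    finally show "mul x y = 0" using ef by simp
  qed
  from pr central_ideal[OF c] central_ideal[OF cf] z
  have "range (mul e) = {0} \<or> range (mul f) = {0}" unfolding prime_algebra_def by blast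
  moreover have "e \<in> range (mul e)" by (metis mul_one_right rangeI)
  moreover have "f \<in> range (mul f)" by (metis mul_one_right rangeI)
  ultimately have "e = 0 \<or> f = 0" by blast
  thus ?thesis unfolding f_def by auto
qed

lemma central_sq_one: assumes pr: "prime_algebra sc mul" and c: "central u" and s: "mul u u = one"
  shows "u = one \<or> u = - one"
proof -
  define e where "e = (1/2::real) *\<^sub>R (one + u)"
  have ce: "central e" unfolding e_def by (intro central_scaleR central_add central_one c)
  have m: "mul (one + u) (one + u) = (one + u) + (one + u)"
    by (simp add: mul_add_left mul_add_right s algebra_simps)
  have "mul e e = (1/2::real) *\<^sub>R ((1/2::real) *\<^sub>R ((one + u) + (one + u)))"
    unfolding e_def by (simp add: m)
  also have "\<dots> = e" unfolding e_def by (simp add: scaleR_2[symmetric])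
  finally have ee: "mul e e = e" .
  from central_idem[OF pr ce ee] show ?thesis
  proof
    assume "e = 0" hence "one + u = 0" unfolding e_def by simp
    hence "- one = u" using neg_eq_iff_add_eq_0 by blast
    thus ?thesis by simp
  next
    assume "e = one"
    hence "(2::real) *\<^sub>R e = (2::real) *\<^sub>R one" by simp
    hence "one + u = one + one" unfolding e_def by (simp add: scaleR_2)
    thus ?thesis by simp
  qed
qed

end

lemma (in altalg) key_lin:
  assumes E: "\<And>x. mul x D - mul D (st x) = mul Z x - mul Z (st x) - (mul x (st Z) - mul (st x) (st Z))"
  shows "mul D x = mul Z x - mul x (st Z)" "mul x D = mul Z x - mul x (st Z)"
proof -
  have E1: "\<And>x. mul x D - mul D (st x) = mul Z x - mul Z (st x) - (mul x (st Z) - mul (st x) (st Z))"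
    by (rule E)
  have E2: "\<And>x. mul x D + mul D (st x) = mul Z x + mul Z (st x) - (mul x (st Z) + mul (st x) (st Z))"
  proof -
    fix x
    have h: "mul (sc \<i> x) D - mul D (st (sc \<i> x)) = mul Z (sc \<i> x) - mul Z (st (sc \<i> x)) - (mul (sc \<i> x) (st Z) - mul (st (sc \<i> x)) (st Z))"
      by (rule E)
    have "sc \<i> (mul x D + mul D (st x)) = sc \<i> (mul Z x + mul Z (st x) - (mul x (st Z) + mul (st x) (st Z)))"
      using h by (simp add: sc_minus_left sc_add_right sc_diff_right algebra_simps)
    thus "mul x D + mul D (st x) = mul Z x + mul Z (st x) - (mul x (st Z) + mul (st x) (st Z))"
      by (rule sc_inj[rotated]) simp
  qed
  have gen: "\<And>x. mul x D = mul Z x - mul x (st Z) \<and> mul D (st x) = mul Z (st x) - mul (st x) (st Z)"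
  proof -
    fix x
    define P where "P = mul x D" define Q where "Q = mul D (st x)"
    define R where "R = mul Z x" define U where "U = mul Z (st x)"
    define V where "V = mul x (st Z)" define W where "W = mul (st x) (st Z)"
    have a: "P - Q = R - U - (V - W)" using E1[of x] unfolding P_def Q_def R_def U_def V_def W_def .
    have b: "P + Q = R + U - (V + W)" using E2[of x] unfolding P_def Q_def R_def U_def V_def W_def .
    have "(2::real) *\<^sub>R P = (2::real) *\<^sub>R (R - V)"
      using arg_cong2[OF a b, of "(+)"] by (simp add: scaleR_2 algebra_simps)
    hence "P = R - V" by simp
    moreover have "(2::real) *\<^sub>R Q = (2::real) *\<^sub>R (U - W)"
      using arg_cong2[OF b a, of "(-)"] by (simp add: scaleR_2 algebra_simps)
    hence "Q = U - W" by simp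
    ultimately show "mul x D = mul Z x - mul x (st Z) \<and> mul D (st x) = mul Z (st x) - mul (st x) (st Z)"
      unfolding P_def Q_def R_def U_def V_def W_def by simp
  qed
  show "mul x D = mul Z x - mul x (st Z)" using gen by blast
  show "mul D x = mul Z x - mul x (st Z)" using gen[of "st x"] by simp
qed

theorem lemma2p9:
  fixes scA :: "complex \<Rightarrow> 'a::banach \<Rightarrow> 'a" and mulA :: "'a \<Rightarrow> 'a \<Rightarrow> 'a" and stA :: "'a \<Rightarrow> 'a"
    and scB :: "complex \<Rightarrow> 'b::banach \<Rightarrow> 'b" and mulB :: "'b \<Rightarrow> 'b \<Rightarrow> 'b" and stB :: "'b \<Rightarrow> 'b"
    and oneA :: 'a and oneB :: 'b and p :: 'a
    and Phi :: "'a \<Rightarrow> 'b"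
  assumes A: "alt_W_star_factor scA mulA stA TYPE('x::banach)"
    and B: "alt_W_star_factor scB mulB stB TYPE('y::banach)"
    and oneA: "\<forall>x. mulA oneA x = x \<and> mulA x oneA = x"
    and oneB: "\<forall>y. mulB oneB y = y \<and> mulB y oneB = y"
    and p: "is_projection mulA stA p" "p \<noteq> oneA"
    and bij: "bij Phi"
    and hom: "\<forall>a b. Phi (mulA a b - mulA b (stA a)) = mulB (Phi a) (Phi b) - mulB (Phi b) (stB (Phi a))"
  shows "(\<forall>a. Phi (scA \<i> a) = scB \<i> (Phi a)) \<or> (\<forall>a. Phi (scA \<i> a) = scB (- \<i>) (Phi a))"
proof -
  have altA: "alt_C_star_algebra scA mulA stA" using A unfolding alt_W_star_factor_def by blast
  have altB: "alt_C_star_algebra scB mulB stB" and prB: "prime_algebra scB mulB"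
    using B unfolding alt_W_star_factor_def by blast+
  interpret A: altalg scA mulA stA oneA using altA oneA by unfold_locales
  interpret B: altalg scB mulB stB oneB using altB oneB by unfold_locales
  define S where "S = (\<lambda>a b. mulA a b - mulA b (stA a))"
  define T where "T = (\<lambda>x y. mulB x y - mulB y (stB x))"
  have homS: "\<And>a b. Phi (S a b) = T (Phi a) (Phi b)" using hom unfolding S_def T_def by blast
  have surj: "\<And>y. \<exists>a. y = Phi a" using bij by (metis bij_pointE)
  define z0 where "z0 = scA (\<i>/2) oneA"
  have Sz0: "\<And>b. S z0 b = scA \<i> b"
  proof -
    fix b
    have "S z0 b = scA (\<i>/2) b + scA (\<i>/2) b" unfolding S_def z0_def by (simp add: A.sc_minus_left)
    also have "\<dots> = scA (\<i>/2 + \<i>/2) b" by (rule A.sc_add_left[symmetric])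
    finally show "S z0 b = scA \<i> b" by simp
  qed
  have Sai: "\<And>a b. S a (scA \<i> b) = scA \<i> (S a b)"
    unfolding S_def by (simp add: A.sc_diff_right)
  define Z where "Z = Phi z0"
  have comm: "\<And>x y. T x (T Z y) = T Z (T x y)"
  proof -
    fix x y
    obtain a where a: "x = Phi a" using surj by blast
    obtain b where b: "y = Phi b" using surj by blast
    have "T x (T Z y) = Phi (S a (S z0 b))" unfolding a b Z_def by (simp add: homS)
    also have "\<dots> = Phi (S z0 (S a b))" by (simp add: Sz0 Sai)
    also have "\<dots> = T Z (T x y)" unfolding a b Z_def by (simp add: homS)
    finally show "T x (T Z y) = T Z (T x y)" .
  qed
  define D where "D = Z - stB Z"
  have E: "\<And>x. mulB x D - mulB D (stB x) = mulB Z x - mulB Z (stB x) - (mulB x (stB Z) - mulB (stB x) (stB Z))"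
  proof -
    fix x
    have "T x (T Z oneB) = T Z (T x oneB)" by (rule comm)
    moreover have "T Z oneB = D" unfolding T_def D_def by simp
    moreover have "T x oneB = x - stB x" unfolding T_def by simp
    ultimately have "T x D = T Z (x - stB x)" by simp
    thus "?thesis x" unfolding T_def by (simp add: B.mul_diff_left B.mul_diff_right B.st_diff)
  qed
  note L = B.key_lin[OF E]
  have cD: "B.central D" unfolding B.central_def using L by simp
  have PhiI: "\<And>b. Phi (scA \<i> b) = mulB D (Phi b)"
    using homS[of z0] Sz0 unfolding T_def L(1) Z_def by simp
  have stD: "stB D = - D" unfolding D_def by (simp add: B.st_diff)
  obtain b0 where b0: "oneB = Phi b0" using surj by blast
  define G where "G = mulB D D"
  have "b0 = scA \<i> (scA \<i> (scA \<i> (scA \<i> b0)))" by simp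
  hence "oneB = mulB D (mulB D (mulB D (mulB D oneB)))" using b0 by (metis PhiI)
  hence GG: "mulB G G = oneB" unfolding G_def by (simp add: B.left_alt)
  have cG: "B.central G" unfolding G_def by (rule B.central_mul[OF cD cD])
  from B.central_sq_one[OF prB cG GG] show ?thesis
  proof
    assume G1: "G = oneB"
    from B.central_sq_one[OF prB cD] G1 have "D = oneB \<or> D = - oneB" unfolding G_def by blast
    hence "oneB = - oneB" using stD by auto
    hence "oneB + oneB = 0" using eq_neg_iff_add_eq_0 by blast
    hence "(2::real) *\<^sub>R oneB = 0" by (simp add: scaleR_2)
    hence o: "oneB = 0" by simp
    have z: "\<And>y::'b. y = 0"
    proof -
      fix y :: 'b
      have "y = mulB y oneB" by (rule B.mul_one_right[symmetric])
      also have "\<dots> = mulB y 0" by (simp only: o)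
      also have "\<dots> = 0" by (rule B.mul_zero_right)
      finally show "y = 0" .
    qed
    have "Phi p = Phi 0" using z[of "Phi p"] z[of "Phi 0"] by simp
    hence "p = 0" using bij bij_is_inj injD by metis
    with p(1) show ?thesis unfolding is_projection_def by simp
  next
    assume G1: "G = - oneB"
    define u where "u = scB \<i> D"
    have cu: "B.central u" unfolding u_def by (rule B.central_sc[OF cD])
    have "mulB u u = scB (-1) G" unfolding u_def G_def by simp
    hence uu: "mulB u u = oneB" using G1 by (simp add: B.sc_minus_left)
    have Du: "D = scB (-\<i>) u" unfolding u_def by simp
    from B.central_sq_one[OF prB cu uu] show ?thesis
    proof
      assume "u = oneB"
      hence "\<And>a. Phi (scA \<i> a) = scB (- \<i>) (Phi a)" using PhiI Du by simp
      thus ?thesis by blast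
    next
      assume "u = - oneB"
      hence "\<And>a. Phi (scA \<i> a) = scB \<i> (Phi a)" using PhiI Du by (simp add: B.sc_minus_left)
      thus ?thesis by blast
    qed
  qed
qed

end
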